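(* Let $T$ be a compact metric space, let $\eta$ be a sample-continuous max-infinitely divisible process on $T$ with vertex function identically $0$ and exponent measure $\mu$, and $\Phi=\sum_{i=1}^N\delta_{\phi_i}$ a Poisson random measure on $\mathbb{C}_0$ with intensity $\mu$, defined on $(\Omega,\mathcal F,\mathbb P)$ with a measurable enumeration $(\phi_i)$ of its atoms, such that $\eta=\max(\Phi)$. Let $K\subset T$ be closed. Then $\Phi_K^+=\sum_{i=1}^N1_{\{\phi_i\not<_K\eta\}}\delta_{\phi_i}$ and $\Phi_K^-=\sum_{i=1}^N1_{\{\phi_i<_K\eta\}}\delta_{\phi_i}$ are measurable maps from $(\Omega,\mathcal F)$ to $(M_p(\mathbb{C}_0),\mathcal M_p)$.
   Context: $\mathbb{C}_0$ is the set of continuous $f:T\to[0,\infty)$ not identically zero (sup norm). $M_p(\mathbb{C}_0)$ is the set of point measures $\sum_{i\in I}\delta_{f_i}$ on $\mathbb{C}_0$ with $\{i:\|f_i\|>\varepsilon\}$ finite for all $\varepsilon>0$, and $\mathcal M_p$ is the $\sigma$-algebra generated by $M\mapsto M(A)$, $A$ Borel. $\max(\Phi)(s)=\max\{\phi_i(s)\}$ ($0$ if $N=0$). The vertex function is $h(t)=\sup\{x:\mathbb P(\eta(t)\ge x)=1\}$; $\mu$ is a Borel measure on $\mathbb{C}_0$ with $\mu(\{\|f\|>\varepsilon\})<\infty$ for all $\varepsilon>0$ and $\mathbb P[\eta(K_i)<x_i,i\le n]=\exp[-\mu(\cup_i\{f(K_i)\ge x_i\})]$. $f<_Kg$ means $f(s)<g(s)$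 for all $s\in K$, and $f\not<_Kg$ its negation. *)

theory Defs
  imports "HOL-Probability.Probability"
begin

text \<open>The space C_0: continuous nonnegative functions on the compact metric space T
  (the type 't), not identically zero, with the sup norm (type of bounded continuous
  functions; on a compact space every continuous function is bounded).\<close>
definition C0 :: "('t::metric_space \<Rightarrow>\<^sub>C real) set" where
  "C0 = {f. (\<forall>s. 0 \<le> apply_bcontfun f s) \<and> f \<noteq> 0}"

definition C0M :: "('t::metric_space \<Rightarrow>\<^sub>C real) measure" where
  "C0M = restrict_space borel C0"

definition pm :: "(nat \<Rightarrow> 'b) \<Rightarrow> nat set \<Rightarrow> 'b set \<Rightarrow> ennreal" where
  "pm f I = (\<lambda>A. \<integral>\<^sup>+ i. indicator A (f i) \<partial>count_space I)"

text \<open>M_p(C_0): point measures sum_{i in I} delta_{f_i} on C_0 with only finitely many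
  atoms of norm > eps for every eps > 0 (such index sets are countable, so we
  index by subsets of nat).\<close>
definition Mp_space :: "(('t::metric_space \<Rightarrow>\<^sub>C real) set \<Rightarrow> ennreal) set" where
  "Mp_space = {M. \<exists>f I. (\<forall>i\<in>I. f i \<in> C0) \<and>
       (\<forall>\<epsilon>>0. finite {i\<in>I. \<epsilon> < norm (f i)}) \<and> M = pm f I}"

definition Mp :: "(('t::metric_space \<Rightarrow>\<^sub>C real) set \<Rightarrow> ennreal) measure" where
  "Mp = sigma Mp_space
     {{M \<in> Mp_space. M A \<in> B} | A B. A \<in> sets (C0M :: ('t \<Rightarrow>\<^sub>C real) measure) \<and> B \<in> sets (borel :: ennreal measure)}"

definition idx :: "enat \<Rightarrow> nat set" where
  "idx n = {i. 1 \<le> i \<and> enat i \<le> n}"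

definition cnt :: "(nat \<Rightarrow> 'w \<Rightarrow> 'b) \<Rightarrow> ('w \<Rightarrow> enat) \<Rightarrow> 'b set \<Rightarrow> 'w \<Rightarrow> ennreal" where
  "cnt \<phi> N A \<omega> = pm (\<lambda>i. \<phi> i \<omega>) (idx (N \<omega>)) A"

definition poisson_random_measure ::
  "'w measure \<Rightarrow> ('t::metric_space \<Rightarrow>\<^sub>C real) measure \<Rightarrow> ('w \<Rightarrow> enat) \<Rightarrow> (nat \<Rightarrow> 'w \<Rightarrow> ('t \<Rightarrow>\<^sub>C real)) \<Rightarrow> bool"
where
  "poisson_random_measure P \<mu> N \<phi> \<longleftrightarrow>
     (\<forall>\<omega>\<in>space P. \<forall>i\<in>idx (N \<omega>). \<phi> i \<omega> \<in> C0) \<and>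
     (\<forall>\<omega>\<in>space P. \<forall>\<epsilon>>0. finite {i\<in>idx (N \<omega>). \<epsilon> < norm (\<phi> i \<omega>)}) \<and>
     (\<forall>A\<in>sets C0M. cnt \<phi> N A \<in> borel_measurable P \<and>
        (if emeasure \<mu> A = \<infinity> then AE \<omega> in P. cnt \<phi> N A \<omega> = \<infinity>
         else (\<forall>k::nat. measure P {\<omega>\<in>space P. cnt \<phi> N A \<omega> = of_nat k}
                = exp (- measure \<mu> A) * measure \<mu> A ^ k / fact k))) \<and>
     (\<forall>(A::nat \<Rightarrow> ('t \<Rightarrow>\<^sub>C real) set) n. (\<forall>j<n. A j \<in> sets C0M) \<longrightarrow> disjoint_family_on A {..<n} \<longrightarrow>
        prob_space.indep_vars P (\<lambda>_. borel) (\<lambda>j. cnt \<phi> N (A j)) {..<n})"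

definition maxPhi :: "(nat \<Rightarrow> 'w \<Rightarrow> ('t::metric_space \<Rightarrow>\<^sub>C real)) \<Rightarrow> ('w \<Rightarrow> enat) \<Rightarrow> 'w \<Rightarrow> 't \<Rightarrow> real" where
  "maxPhi \<phi> N \<omega> s = (if idx (N \<omega>) = {} then 0 else Sup ((\<lambda>i. apply_bcontfun (\<phi> i \<omega>) s) ` idx (N \<omega>)))"

definition supK :: "('t::metric_space \<Rightarrow>\<^sub>C real) \<Rightarrow> 't set \<Rightarrow> real" where
  "supK f K = Sup (apply_bcontfun f ` K)"

definition vertex :: "'w measure \<Rightarrow> ('w \<Rightarrow> ('t::metric_space \<Rightarrow>\<^sub>C real)) \<Rightarrow> 't \<Rightarrow> real" where
  "vertex P \<eta> t = Sup {x. prob_space.prob P {\<omega>\<in>space P. x \<le> apply_bcontfun (\<eta> \<omega>) t} = 1}"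

definition max_id :: "'w measure \<Rightarrow> ('w \<Rightarrow> ('t::metric_space \<Rightarrow>\<^sub>C real)) \<Rightarrow> bool" where
  "max_id P \<eta> \<longleftrightarrow> (\<forall>n::nat. 1 \<le> n \<longrightarrow>
     (\<exists>Q::('t \<Rightarrow>\<^sub>C real) measure. sets Q = sets borel \<and> prob_space Q \<and>
        (\<lambda>g. Bcontfun (\<lambda>s. Max ((\<lambda>i. apply_bcontfun (g i) s) ` {..<n}))) \<in> measurable (PiM {..<n} (\<lambda>_. Q)) borel \<and>
        distr (PiM {..<n} (\<lambda>_. Q)) borel (\<lambda>g. Bcontfun (\<lambda>s. Max ((\<lambda>i. apply_bcontfun (g i) s) ` {..<n})))
          = distr P borel \<eta>))"

definition exponent_measure :: "'w measure \<Rightarrow> ('w \<Rightarrow> ('t::metric_space \<Rightarrow>\<^sub>C real)) \<Rightarrow> ('t \<Rightarrow>\<^sub>C real) measure \<Rightarrow> bool" where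
  "exponent_measure P \<eta> \<mu> \<longleftrightarrow>
     sets \<mu> = sets C0M \<and> (\<forall>\<epsilon>>0. emeasure \<mu> {f\<in>C0. \<epsilon> < norm f} < \<infinity>) \<and>
     (\<forall>(n::nat) (K::nat \<Rightarrow> 't set) (x::nat \<Rightarrow> real). 1 \<le> n \<longrightarrow> (\<forall>i<n. compact (K i) \<and> K i \<noteq> {} \<and> 0 < x i) \<longrightarrow>
        (let U = (\<Union>i<n. {f\<in>C0. x i \<le> supK f (K i)}) in
         measure P {\<omega>\<in>space P. \<forall>i<n. supK (\<eta> \<omega>) (K i) < x i}
          = (if emeasure \<mu> U = \<infinity> then 0 else exp (- measure \<mu> U))))"

end

theory Submission
  imports Defs
begin

lemma dense_seq:
  fixes K :: "'t::metric_space set"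
  assumes "compact K" "K \<noteq> {}"
  obtains d :: "nat \<Rightarrow> 't" where "range d \<subseteq> K" "K \<subseteq> closure (range d)"
proof -
  have "\<forall>n::nat. \<exists>C. finite C \<and> C \<subseteq> K \<and> K \<subseteq> (\<Union>x\<in>C. ball x (1 / real (Suc n)))"
  proof
    fix n :: nat
    have "K \<subseteq> (\<Union>x\<in>K. ball x (1 / real (Suc n)))" by auto
    then obtain C' where "C' \<subseteq> K" "finite C'" "K \<subseteq> (\<Union>x\<in>C'. ball x (1 / real (Suc n)))"
      using compactE_image[OF assms(1), of K "\<lambda>x. ball x (1 / real (Suc n))"] by auto
    then show "\<exists>C. finite C \<and> C \<subseteq> K \<and> K \<subseteq> (\<Union>x\<in>C. ball x (1 / real (Suc n)))"
      by blast
  qed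
  then obtain C where C: "\<And>n. finite (C n)" "\<And>n. C n \<subseteq> K"
    "\<And>n. K \<subseteq> (\<Union>x\<in>C n. ball x (1 / real (Suc n)))" by metis
  define D where "D = (\<Union>n. C n)"
  have cD: "countable D" unfolding D_def using C(1) by (simp add: countable_finite)
  have DK: "D \<subseteq> K" unfolding D_def using C(2) by auto
  have Dne: "D \<noteq> {}"
  proof -
    obtain s where "s \<in> K" using assms(2) by auto
    then obtain x where "x \<in> C 0" using C(3)[of 0] by auto
    then show ?thesis unfolding D_def by auto
  qed
  have rD: "range (from_nat_into D) = D" using range_from_nat_into[OF Dne cD] .
  have "K \<subseteq> closure D"
  proof
    fix s assume s: "s \<in> K"
    show "s \<in> closure D"
      unfolding closure_approachable
    proof (intro allI impI)
      fix e :: real assume "e > 0"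
      then obtain n where n: "inverse (real (Suc n)) < e" using reals_Archimedean by blast
      obtain x where x: "x \<in> C n" "s \<in> ball x (1 / real (Suc n))" using C(3)[of n] s by auto
      have "dist x s < 1 / real (Suc n)" using x(2) by simp
      then have "dist x s < e" using n by (metis inverse_eq_divide less_trans)
      then show "\<exists>y\<in>D. dist y s < e" using x(1) unfolding D_def by auto
    qed
  qed
  then show ?thesis using that[of "from_nat_into D"] rD DK by auto
qed

lemma cont_apply: "continuous_on UNIV (\<lambda>f::('a::topological_space \<Rightarrow>\<^sub>C 'b::metric_space). apply_bcontfun f s)"
  unfolding continuous_on_iff
proof (intro ballI allI impI)
  fix x :: "'a \<Rightarrow>\<^sub>C 'b" and e :: real assume "x \<in> UNIV" "0 < e"
  show "\<exists>d>0. \<forall>x'\<in>UNIV. dist x' x < d \<longrightarrow> dist (apply_bcontfun x' s) (apply_bcontfun x s) < e"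
  proof (intro exI conjI ballI impI)
    show "0 < e" by fact
    fix x' :: "'a \<Rightarrow>\<^sub>C 'b" assume "dist x' x < e"
    moreover have "dist (apply_bcontfun x' s) (apply_bcontfun x s) \<le> dist x' x"
      by (rule dist_bounded)
    ultimately show "dist (apply_bcontfun x' s) (apply_bcontfun x s) < e" by linarith
  qed
qed

lemma meas_apply:
  assumes "g \<in> measurable M borel"
  shows "(\<lambda>\<omega>. apply_bcontfun (g \<omega>) s :: real) \<in> borel_measurable M"
  using measurable_compose[OF assms borel_measurable_continuous_onI[OF cont_apply]] by simp


lemma cond_equiv:
  fixes f g :: "'t::metric_space \<Rightarrow>\<^sub>C real" and d :: "nat \<Rightarrow> 't"
  assumes K: "compact K" and dK: "range d \<subseteq> K" and Kd: "K \<subseteq> closure (range d)"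
  shows "(\<forall>s\<in>K. apply_bcontfun f s < apply_bcontfun g s) \<longleftrightarrow>
         (\<exists>n::nat. \<forall>k. apply_bcontfun f (d k) + 1 / real (Suc n) \<le> apply_bcontfun g (d k))"
proof
  assume H: "\<forall>s\<in>K. apply_bcontfun f s < apply_bcontfun g s"
  have Kne: "K \<noteq> {}" using dK by auto
  have cont: "continuous_on K (\<lambda>s. apply_bcontfun g s - apply_bcontfun f s)"
    by (intro continuous_on_diff continuous_on_apply_bcontfun)
  obtain x where x: "x \<in> K" "\<forall>y\<in>K. apply_bcontfun g x - apply_bcontfun f x \<le> apply_bcontfun g y - apply_bcontfun f y"
    using continuous_attains_inf[OF K Kne cont] by blast
  have mpos: "0 < apply_bcontfun g x - apply_bcontfun f x" using H x(1) by auto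
  then obtain n where n: "inverse (real (Suc n)) < apply_bcontfun g x - apply_bcontfun f x"
    using reals_Archimedean by blast
  have "\<forall>k. apply_bcontfun f (d k) + 1 / real (Suc n) \<le> apply_bcontfun g (d k)"
  proof
    fix k
    have "d k \<in> K" using dK by auto
    then have "apply_bcontfun g x - apply_bcontfun f x \<le> apply_bcontfun g (d k) - apply_bcontfun f (d k)"
      using x(2) by blast
    then show "apply_bcontfun f (d k) + 1 / real (Suc n) \<le> apply_bcontfun g (d k)"
      using n by (simp add: inverse_eq_divide)
  qed
  then show "\<exists>n::nat. \<forall>k. apply_bcontfun f (d k) + 1 / real (Suc n) \<le> apply_bcontfun g (d k)" by blast
next
  assume "\<exists>n::nat. \<forall>k. apply_bcontfun f (d k) + 1 / real (Suc n) \<le> apply_bcontfun g (d k)"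
  then obtain n :: nat where n: "\<forall>k. apply_bcontfun f (d k) + 1 / real (Suc n) \<le> apply_bcontfun g (d k)" by blast
  define S where "S = {s. apply_bcontfun f s + 1 / real (Suc n) \<le> apply_bcontfun g s}"
  have "closed S" unfolding S_def
    by (intro closed_Collect_le continuous_on_add continuous_on_const continuous_on_apply_bcontfun)
  moreover have "range d \<subseteq> S" using n unfolding S_def by auto
  ultimately have "closure (range d) \<subseteq> S" by (rule closure_minimal[rotated])
  then have "K \<subseteq> S" using Kd by blast
  have c: "0 < 1 / real (Suc n)" by simp
  show "\<forall>s\<in>K. apply_bcontfun f s < apply_bcontfun g s"
  proof
    fix s assume "s \<in> K"
    then have "apply_bcontfun f s + 1 / real (Suc n) \<le> apply_bcontfun g s"
      using \<open>K \<subseteq> S\<close> unfolding S_def by blast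
    then show "apply_bcontfun f s < apply_bcontfun g s" using c by linarith
  qed
qed

lemma cond_meas:
  fixes \<eta> :: "'w \<Rightarrow> ('t::metric_space \<Rightarrow>\<^sub>C real)" and \<psi> :: "'w \<Rightarrow> ('t \<Rightarrow>\<^sub>C real)"
  assumes K: "compact K" and e: "\<eta> \<in> measurable P borel" and p: "\<psi> \<in> measurable P borel"
  shows "{\<omega>\<in>space P. \<forall>s\<in>K. apply_bcontfun (\<psi> \<omega>) s < apply_bcontfun (\<eta> \<omega>) s} \<in> sets P"
proof (cases "K = {}")
  case True then show ?thesis by simp
next
  case False
  obtain d :: "nat \<Rightarrow> 't" where d: "range d \<subseteq> K" "K \<subseteq> closure (range d)"
    using dense_seq[OF K False] by blast
  have [measurable]: "\<And>s. (\<lambda>\<omega>. apply_bcontfun (\<eta> \<omega>) s :: real) \<in> borel_measurable P"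
    "\<And>s. (\<lambda>\<omega>. apply_bcontfun (\<psi> \<omega>) s :: real) \<in> borel_measurable P"
    using meas_apply[OF e] meas_apply[OF p] by auto
  have "{\<omega>\<in>space P. \<forall>s\<in>K. apply_bcontfun (\<psi> \<omega>) s < apply_bcontfun (\<eta> \<omega>) s}
      = {\<omega>\<in>space P. \<exists>n::nat. \<forall>k. apply_bcontfun (\<psi> \<omega>) (d k) + 1 / real (Suc n) \<le> apply_bcontfun (\<eta> \<omega>) (d k)}"
    by (rule Collect_cong) (simp only: cond_equiv[OF K d])
  also have "\<dots> \<in> sets P" by measurable
  finally show ?thesis .
qed

lemma pm_meas:
  fixes P :: "'w measure"
    and N :: "'w \<Rightarrow> enat"
    and \<phi> :: "nat \<Rightarrow> 'w \<Rightarrow> ('t::metric_space \<Rightarrow>\<^sub>C real)"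
    and C :: "nat \<Rightarrow> 'w \<Rightarrow> bool"
  assumes Nm: "N \<in> measurable P (count_space UNIV)"
    and pm: "\<forall>i. \<phi> i \<in> measurable P borel"
    and C0in: "\<forall>\<omega>\<in>space P. \<forall>i\<in>idx (N \<omega>). \<phi> i \<omega> \<in> C0"
    and fin: "\<forall>\<omega>\<in>space P. \<forall>\<epsilon>>0. finite {i\<in>idx (N \<omega>). \<epsilon> < norm (\<phi> i \<omega>)}"
    and Cm: "\<And>i. {\<omega>\<in>space P. C i \<omega>} \<in> sets P"
  shows "(\<lambda>\<omega>. pm (\<lambda>i. \<phi> i \<omega>) {i\<in>idx (N \<omega>). C i \<omega>}) \<in> measurable P Mp"
proof -
  define F where "F = (\<lambda>\<omega>. pm (\<lambda>i. \<phi> i \<omega>) {i\<in>idx (N \<omega>). C i \<omega>})"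
  have inMp: "F \<omega> \<in> Mp_space" if "\<omega> \<in> space P" for \<omega>
  proof -
    have "\<forall>\<epsilon>>0. finite {i\<in>{i\<in>idx (N \<omega>). C i \<omega>}. \<epsilon> < norm (\<phi> i \<omega>)}"
    proof (intro allI impI)
      fix \<epsilon> :: real assume "\<epsilon> > 0"
      then have "finite {i\<in>idx (N \<omega>). \<epsilon> < norm (\<phi> i \<omega>)}" using fin that by blast
      then show "finite {i\<in>{i\<in>idx (N \<omega>). C i \<omega>}. \<epsilon> < norm (\<phi> i \<omega>)}"
        by (rule finite_subset[rotated]) auto
    qed
    moreover have "\<forall>i\<in>{i\<in>idx (N \<omega>). C i \<omega>}. \<phi> i \<omega> \<in> C0" using C0in that by blast
    ultimately show ?thesis unfolding Mp_space_def F_def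
      by (intro CollectI exI[of _ "\<lambda>i. \<phi> i \<omega>"] exI[of _ "{i\<in>idx (N \<omega>). C i \<omega>}"] conjI refl)
  qed
  have Fm: "(\<lambda>\<omega>. F \<omega> A) \<in> borel_measurable P" if A: "A \<in> sets C0M" for A
  proof -
    obtain X where X: "X \<in> sets borel" "A = C0 \<inter> X"
      using A unfolding C0M_def sets_restrict_space by blast
    define S where "S i = {\<omega>\<in>space P. i \<in> idx (N \<omega>) \<and> C i \<omega> \<and> \<phi> i \<omega> \<in> X}" for i
    have Sm: "S i \<in> sets P" for i
    proof -
      have 1: "{\<omega>\<in>space P. i \<in> idx (N \<omega>)} \<in> sets P"
      proof -
        have "N -` {n. i \<in> idx n} \<inter> space P \<in> sets P"
          using measurable_sets[OF Nm, of "{n. i \<in> idx n}"] by simp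
        moreover have "N -` {n. i \<in> idx n} \<inter> space P = {\<omega>\<in>space P. i \<in> idx (N \<omega>)}" by auto
        ultimately show ?thesis by simp
      qed
      have 2: "{\<omega>\<in>space P. \<phi> i \<omega> \<in> X} \<in> sets P"
      proof -
        have "\<phi> i -` X \<inter> space P \<in> sets P" using measurable_sets[OF spec[OF pm, of i] X(1)] .
        moreover have "\<phi> i -` X \<inter> space P = {\<omega>\<in>space P. \<phi> i \<omega> \<in> X}" by auto
        ultimately show ?thesis by simp
      qed
      have "S i = {\<omega>\<in>space P. i \<in> idx (N \<omega>)} \<inter> {\<omega>\<in>space P. C i \<omega>} \<inter> {\<omega>\<in>space P. \<phi> i \<omega> \<in> X}"
        unfolding S_def by auto
      then show ?thesis using 1 2 Cm[of i] by auto
    qed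
    have eq: "F \<omega> A = (\<Sum>i. indicator (S i) \<omega>)" if \<omega>: "\<omega> \<in> space P" for \<omega>
    proof -
      have "F \<omega> A = (\<integral>\<^sup>+ i. indicator A (\<phi> i \<omega>) \<partial>count_space {i\<in>idx (N \<omega>). C i \<omega>})"
        unfolding F_def pm_def by simp
      also have "\<dots> = (\<integral>\<^sup>+ i. indicator A (\<phi> i \<omega>) * indicator {i\<in>idx (N \<omega>). C i \<omega>} i \<partial>count_space UNIV)"
        by (rule nn_integral_count_space_indicator) (simp add: NO_MATCH_def)
      also have "\<dots> = (\<Sum>i. indicator A (\<phi> i \<omega>) * indicator {i\<in>idx (N \<omega>). C i \<omega>} i)"
        by (rule nn_integral_count_space_nat)
      also have "\<dots> = (\<Sum>i. indicator (S i) \<omega>)"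
      proof (rule suminf_cong)
        fix i
        show "indicator A (\<phi> i \<omega>) * indicator {i\<in>idx (N \<omega>). C i \<omega>} i = (indicator (S i) \<omega> :: ennreal)"
        proof (cases "i \<in> idx (N \<omega>)")
          case True
          then have "\<phi> i \<omega> \<in> C0" using C0in \<omega> by blast
          then show ?thesis using True \<omega> unfolding S_def X(2) by (auto simp: indicator_def)
        next
          case False
          then show ?thesis unfolding S_def by (auto simp: indicator_def)
        qed
      qed
      finally show ?thesis .
    qed
    have "(\<lambda>\<omega>. \<Sum>i. indicator (S i) \<omega> :: ennreal) \<in> borel_measurable P"
      using Sm by (intro borel_measurable_suminf_order borel_measurable_indicator)
    then show ?thesis using eq by (subst measurable_cong[where g="\<lambda>\<omega>. \<Sum>i. indicator (S i) \<omega>"]) auto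
  qed
  have "F \<in> measurable P Mp"
    unfolding Mp_def
  proof (rule measurable_measure_of)
    show "{{M \<in> Mp_space. M A \<in> B} |A B. A \<in> sets (C0M :: ('t \<Rightarrow>\<^sub>C real) measure) \<and> B \<in> sets (borel :: ennreal measure)} \<subseteq> Pow Mp_space"
      by auto
    show "F \<in> space P \<rightarrow> Mp_space" using inMp by auto
    fix y assume "y \<in> {{M \<in> Mp_space. M A \<in> B} |A B. A \<in> sets (C0M :: ('t \<Rightarrow>\<^sub>C real) measure) \<and> B \<in> sets (borel :: ennreal measure)}"
    then obtain A B where AB: "A \<in> sets (C0M :: ('t \<Rightarrow>\<^sub>C real) measure)" "B \<in> sets (borel :: ennreal measure)"
      "y = {M \<in> Mp_space. M A \<in> B}" by blast
    have "F -` y \<inter> space P = (\<lambda>\<omega>. F \<omega> A) -` B \<inter> space P" using inMp AB(3) by auto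
    also have "\<dots> \<in> sets P" using measurable_sets[OF Fm[OF AB(1)] AB(2)] .
    finally show "F -` y \<inter> space P \<in> sets P" .
  qed
  then show ?thesis unfolding F_def .
qed

theorem lemma3:
  fixes P :: "'w measure"
    and \<eta> :: "'w \<Rightarrow> ('t::metric_space \<Rightarrow>\<^sub>C real)"
    and \<mu> :: "('t \<Rightarrow>\<^sub>C real) measure"
    and N :: "'w \<Rightarrow> enat"
    and \<phi> :: "nat \<Rightarrow> 'w \<Rightarrow> ('t \<Rightarrow>\<^sub>C real)"
    and K :: "'t set"
  assumes "compact (UNIV :: 't set)"
    and "prob_space P"
    and "\<eta> \<in> measurable P borel"
    and "max_id P \<eta>"
    and "\<forall>t. vertex P \<eta> t = 0"
    and "exponent_measure P \<eta> \<mu>"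
    and "N \<in> measurable P (count_space UNIV)"
    and "\<forall>i. \<phi> i \<in> measurable P borel"
    and "poisson_random_measure P \<mu> N \<phi>"
    and "\<forall>\<omega>\<in>space P. \<forall>s. apply_bcontfun (\<eta> \<omega>) s = maxPhi \<phi> N \<omega> s"
    and "closed K"
  shows "(\<lambda>\<omega>. pm (\<lambda>i. \<phi> i \<omega>) {i\<in>idx (N \<omega>). \<not> (\<forall>s\<in>K. apply_bcontfun (\<phi> i \<omega>) s < apply_bcontfun (\<eta> \<omega>) s)})
           \<in> measurable P Mp \<and>
         (\<lambda>\<omega>. pm (\<lambda>i. \<phi> i \<omega>) {i\<in>idx (N \<omega>). \<forall>s\<in>K. apply_bcontfun (\<phi> i \<omega>) s < apply_bcontfun (\<eta> \<omega>) s})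
           \<in> measurable P Mp"
proof -
  have K: "compact K" using assms(1,11) compact_Int_closed[of UNIV K] by simp
  have C0in: "\<forall>\<omega>\<in>space P. \<forall>i\<in>idx (N \<omega>). \<phi> i \<omega> \<in> C0"
    and fin: "\<forall>\<omega>\<in>space P. \<forall>\<epsilon>>0. finite {i\<in>idx (N \<omega>). \<epsilon> < norm (\<phi> i \<omega>)}"
    using assms(9) unfolding poisson_random_measure_def by blast+
  have S: "{\<omega>\<in>space P. \<forall>s\<in>K. apply_bcontfun (\<phi> i \<omega>) s < apply_bcontfun (\<eta> \<omega>) s} \<in> sets P" for i
    using cond_meas[OF K assms(3)] assms(8) by blast
  have S': "{\<omega>\<in>space P. \<not> (\<forall>s\<in>K. apply_bcontfun (\<phi> i \<omega>) s < apply_bcontfun (\<eta> \<omega>) s)} \<in> sets P" for i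
  proof -
    have "{\<omega>\<in>space P. \<not> (\<forall>s\<in>K. apply_bcontfun (\<phi> i \<omega>) s < apply_bcontfun (\<eta> \<omega>) s)}
      = space P - {\<omega>\<in>space P. \<forall>s\<in>K. apply_bcontfun (\<phi> i \<omega>) s < apply_bcontfun (\<eta> \<omega>) s}" by auto
    then show ?thesis using S[of i] by auto
  qed
  show ?thesis
  proof
    show "(\<lambda>\<omega>. pm (\<lambda>i. \<phi> i \<omega>) {i\<in>idx (N \<omega>). \<not> (\<forall>s\<in>K. apply_bcontfun (\<phi> i \<omega>) s < apply_bcontfun (\<eta> \<omega>) s)})
           \<in> measurable P Mp"
      by (rule pm_meas[where C="\<lambda>i \<omega>. \<not> (\<forall>s\<in>K. apply_bcontfun (\<phi> i \<omega>) s < apply_bcontfun (\<eta> \<omega>) s)", OF assms(7,8) C0in fin S'])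
    show "(\<lambda>\<omega>. pm (\<lambda>i. \<phi> i \<omega>) {i\<in>idx (N \<omega>). \<forall>s\<in>K. apply_bcontfun (\<phi> i \<omega>) s < apply_bcontfun (\<eta> \<omega>) s})
           \<in> measurable P Mp"
      by (rule pm_meas[where C="\<lambda>i \<omega>. \<forall>s\<in>K. apply_bcontfun (\<phi> i \<omega>) s < apply_bcontfun (\<eta> \<omega>) s", OF assms(7,8) C0in fin S])
  qed
qed

end
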